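(* Let $k \in \mathbb N$, $T \leq +\infty$, $0 \leq t_1 < t_2 < T$ and $0 < R \leq 1$. Let $h, h_1, h_2 \in C^0([0,1] \times [0,T)) \cap C^{2,1}((0,1) \times (0,T))$ be classical solutions of $$u_t = u_{rr} + \frac{u_r}{r} - k^2 \frac{\sin(2u)}{2r^2}, \quad 0 < r < 1, \ 0 < t < T,$$ and assume that for each $i \in \{1,2\}$, either $h(0,t) \neq h_i(0,t)$ for all $t \in [0,T)$, or $h(0,t) = h_i(0,t) = m_i\pi \in \pi\mathbb Z$ for all $t \in [0,T)$. If $\Gamma$ is a non-empty (path-)connected component of $\{(r,t) \in [0,R] \times [t_1,t_2]: h_1 < h < h_2\}$ and if $$\max_{(r,t) \in \overline{\Gamma}} h_1 < C < \min_{(r,t) \in \overline{\Gamma}} h_2$$ for some $C \in \mathbb R$, then $$\Gamma \cap \left[ \{r = 0\} \cup \{r = R\} \cup \{t = t_1\} \right] \neq \emptyset.$$ Moreover, no matter $\Gamma$, all these hypotheses (including the existence of such $C$) are satisfied when $h$ is any such solution with $h(0,t) = 0$ for all $t \in [0,T)$, $h_1 = \pi/2$ or $h_1 = \chi_{\alpha}(r) = \pi - 2 \arctan(\alpha^k r^k)$ with $\alpha > 0$, and $h_2 = \pi$.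
   Context: $C^{2,1}$ means continuously differentiable in $t$ and twice continuously differentiable in $r$, with derivatives continuous up to the included boundary. Closures are taken in $\mathbb R^2$. *)

theory Defs
  imports "HOL-Analysis.Analysis"
begin

definition dom_closed :: "ereal \<Rightarrow> (real \<times> real) set" where
  "dom_closed T = {(r,t). 0 \<le> r \<and> r \<le> 1 \<and> 0 \<le> t \<and> ereal t < T}"

definition dom_open :: "ereal \<Rightarrow> (real \<times> real) set" where
  "dom_open T = {(r,t). 0 < r \<and> r < 1 \<and> 0 < t \<and> ereal t < T}"

definition classical_sol :: "nat \<Rightarrow> ereal \<Rightarrow> (real \<Rightarrow> real \<Rightarrow> real) \<Rightarrow> bool" where
  "classical_sol k T u \<longleftrightarrow>
     continuous_on (dom_closed T) (\<lambda>(r,t). u r t) \<and>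
     (\<exists>ur urr ut.
        continuous_on (dom_open T) (\<lambda>(r,t). ur r t) \<and>
        continuous_on (dom_open T) (\<lambda>(r,t). urr r t) \<and>
        continuous_on (dom_open T) (\<lambda>(r,t). ut r t) \<and>
        (\<forall>(r,t)\<in>dom_open T.
           ((\<lambda>s. u s t) has_real_derivative ur r t) (at r) \<and>
           ((\<lambda>s. ur s t) has_real_derivative urr r t) (at r) \<and>
           ((\<lambda>s. u r s) has_real_derivative ut r t) (at t) \<and>
           ut r t = urr r t + ur r t / r - (real k)^2 * sin (2 * u r t) / (2 * r^2)))"

definition origin_cond :: "ereal \<Rightarrow> (real \<Rightarrow> real \<Rightarrow> real) \<Rightarrow> (real \<Rightarrow> real \<Rightarrow> real) \<Rightarrow> bool" where
  "origin_cond T h g \<longleftrightarrow>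
     (\<forall>t. 0 \<le> t \<and> ereal t < T \<longrightarrow> h 0 t \<noteq> g 0 t) \<or>
     (\<exists>m::int. \<forall>t. 0 \<le> t \<and> ereal t < T \<longrightarrow> h 0 t = of_int m * pi \<and> g 0 t = of_int m * pi)"

definition between_set :: "real \<Rightarrow> real \<Rightarrow> real \<Rightarrow> (real \<Rightarrow> real \<Rightarrow> real) \<Rightarrow> (real \<Rightarrow> real \<Rightarrow> real)
     \<Rightarrow> (real \<Rightarrow> real \<Rightarrow> real) \<Rightarrow> (real \<times> real) set" where
  "between_set R t1 t2 h h1 h2 =
     {(r,t). 0 \<le> r \<and> r \<le> R \<and> t1 \<le> t \<and> t \<le> t2 \<and> h1 r t < h r t \<and> h r t < h2 r t}"

end

theory Submission
  imports Defs
begin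


lemma second_deriv_max:
  fixes f f' :: "real \<Rightarrow> real"
  assumes d: "d > 0" and mx: "\<forall>y. \<bar>y - x\<bar> < d \<longrightarrow> f y \<le> f x"
    and df: "\<forall>y. \<bar>y - x\<bar> < d \<longrightarrow> (f has_real_derivative f' y) (at y)"
    and d2: "(f' has_real_derivative f2) (at x)"
  shows "f' x = 0 \<and> f2 \<le> 0"
proof -
  have "f' x = 0"
    using DERIV_local_max[of f "f' x" x d] df mx d by (auto simp: abs_minus_commute)
  moreover have "f2 \<le> 0"
  proof (rule ccontr)
    assume "\<not> f2 \<le> 0"
    then obtain e where e: "e > 0" "\<forall>h>0. h < e \<longrightarrow> f' x < f' (x + h)"
      using DERIV_pos_inc_right[OF d2] by auto
    define b where "b = x + min e d / 2"
    have "x < b" using e d by (simp add: b_def)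
    then obtain z where z: "x < z" "z < b" "f b - f x = (b - x) * f' z"
      using MVT2[of x b f f'] df d e by (force simp: b_def)
    have "z - x > 0" "z - x < e" using z e d by (auto simp: b_def)
    hence "f' x < f' (x + (z - x))" using e by blast
    hence "f' x < f' z" by simp
    hence "(b - x) * f' z > 0" using z \<open>x < b\<close> \<open>f' x = 0\<close> by simp
    hence "f b > f x" using z by linarith
    moreover have "f b \<le> f x" using mx d e by (simp add: b_def)
    ultimately show False by simp
  qed
  ultimately show ?thesis by simp
qed

lemma left_max_deriv:
  fixes g :: "real \<Rightarrow> real"
  assumes d: "d > 0" and mx: "\<forall>y. x - d < y \<and> y \<le> x \<longrightarrow> g y \<le> g x"
    and dg: "(g has_real_derivative g') (at x)"
  shows "g' \<ge> 0"
proof (rule ccontr)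
  assume "\<not> g' \<ge> 0"
  then obtain e where e: "e > 0" "\<forall>h>0. h < e \<longrightarrow> g x < g (x - h)"
    using DERIV_neg_dec_left[OF dg] by auto
  have "g x < g (x - min e d / 2)" using e d by simp
  moreover have "g (x - min e d / 2) \<le> g x" using mx d e by simp
  ultimately show False by simp
qed

lemma sin_lip: "\<bar>sin (a::real) - sin b\<bar> \<le> \<bar>a - b\<bar>"
proof -
  have "\<bar>sin a - sin b\<bar> = \<bar>2 * sin ((a - b)/2) * cos ((a + b)/2)\<bar>"
    by (simp add: sin_diff_sin)
  also have "\<dots> \<le> 2 * \<bar>sin ((a - b)/2)\<bar>"
    by (simp add: abs_mult mult_left_le)
  also have "\<dots> \<le> 2 * \<bar>(a - b)/2\<bar>" using abs_sin_le_one abs_sin_x_le_abs_x by (meson mult_left_mono zero_le_numeral)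
  finally show ?thesis by simp
qed




lemma closed_sub_le:
  fixes f :: "'a::topological_space \<Rightarrow> real"
  assumes "continuous_on S f" "closed S"
  shows "closed {p\<in>S. f p \<le> c}"
proof -
  have "{p\<in>S. f p \<le> c} = S \<inter> f -` {..c}" by auto
  thus ?thesis using continuous_closed_preimage[OF assms closed_atMost] by simp
qed

lemma closed_sub_ge:
  fixes f :: "'a::topological_space \<Rightarrow> real"
  assumes "continuous_on S f" "closed S"
  shows "closed {p\<in>S. c \<le> f p}"
proof -
  have "{p\<in>S. c \<le> f p} = S \<inter> f -` {c..}" by auto
  thus ?thesis using continuous_closed_preimage[OF assms closed_atLeast] by simp
qed

lemma open_lt:
  fixes f :: "'a::metric_space \<Rightarrow> real"
  assumes "continuous_on S f" "p \<in> S" "f p < c"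
  shows "\<exists>\<rho>>0. \<forall>y\<in>S. dist y p < \<rho> \<longrightarrow> f y < c"
proof -
  obtain d where d: "d > 0" "\<forall>y\<in>S. dist y p < d \<longrightarrow> dist (f y) (f p) < c - f p"
    using assms unfolding continuous_on_iff by (metis diff_gt_0_iff_gt)
  show ?thesis
    by (rule exI[of _ d]) (use d in \<open>auto simp: dist_real_def\<close>)
qed

lemma comp_nbhd:
  fixes S :: "'a::real_normed_vector set"
  assumes "convex S" "G = connected_component_set B x" "B \<subseteq> S" "p \<in> closure G" "p \<in> B"
    "\<rho> > 0" "\<forall>y\<in>S. dist y p < \<rho> \<longrightarrow> y \<in> B"
  shows "\<forall>y\<in>S. dist y p < \<rho> \<longrightarrow> y \<in> G"
proof -
  define K where "K = S \<inter> ball p \<rho>"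
  have "convex K" unfolding K_def by (rule convex_Int[OF assms(1) convex_ball])
  hence cK: "connected K" by (rule convex_connected)
  have pK: "p \<in> K" using assms by (auto simp: K_def)
  have KB: "K \<subseteq> B" using assms(7) by (auto simp: K_def dist_commute)
  have K1: "K \<subseteq> connected_component_set B p"
    by (rule connected_component_maximal[OF pK cK KB])
  obtain y where y: "y \<in> G" "dist y p < \<rho>" using assms(4,6) closure_approachable by blast
  have "y \<in> B" using y assms(2) connected_component_subset by blast
  hence "y \<in> K" using y assms(3) by (auto simp: K_def dist_commute)
  hence "connected_component_set B y = connected_component_set B p"
    using K1 connected_component_eq by blast
  moreover have "connected_component_set B y = G"
    using y assms(2) connected_component_eq by blast
  ultimately have "K \<subseteq> G" using K1 by simp
  thus ?thesis by (auto simp: K_def dist_commute)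
qed

lemma cs_cont:
  assumes "classical_sol k T u" "S \<subseteq> dom_closed T"
  shows "continuous_on S (\<lambda>p. u (fst p) (snd p))"
proof -
  have "continuous_on (dom_closed T) (\<lambda>(r,t). u r t)" using assms(1) by (simp add: classical_sol_def)
  thus ?thesis using continuous_on_subset[OF _ assms(2)] by (simp add: case_prod_unfold)
qed

lemma cs_neg:
  assumes "classical_sol k T u"
  shows "classical_sol k T (\<lambda>r t. - u r t)"
proof -
  obtain ur urr ut where
    c: "continuous_on (dom_open T) (\<lambda>(r,t). ur r t)" "continuous_on (dom_open T) (\<lambda>(r,t). urr r t)"
       "continuous_on (dom_open T) (\<lambda>(r,t). ut r t)" and
    e: "\<forall>(r,t)\<in>dom_open T.
           ((\<lambda>s. u s t) has_real_derivative ur r t) (at r) \<and>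
           ((\<lambda>s. ur s t) has_real_derivative urr r t) (at r) \<and>
           ((\<lambda>s. u r s) has_real_derivative ut r t) (at t) \<and>
           ut r t = urr r t + ur r t / r - (real k)^2 * sin (2 * u r t) / (2 * r^2)"
    and c0: "continuous_on (dom_closed T) (\<lambda>(r,t). u r t)"
    using assms unfolding classical_sol_def by blast
  have d0: "continuous_on (dom_closed T) (\<lambda>(r, t). - u r t)"
      using continuous_on_minus[OF c0] by (simp add: case_prod_unfold)
  have d1: "continuous_on (dom_open T) (\<lambda>(r, t). - ur r t)"
      using continuous_on_minus[OF c(1)] by (simp add: case_prod_unfold)
  have d2: "continuous_on (dom_open T) (\<lambda>(r, t). - urr r t)"
      using continuous_on_minus[OF c(2)] by (simp add: case_prod_unfold)
  have d3: "continuous_on (dom_open T) (\<lambda>(r, t). - ut r t)"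
      using continuous_on_minus[OF c(3)] by (simp add: case_prod_unfold)
  have d4: "\<forall>(r, t)\<in>dom_open T.
       ((\<lambda>s. - u s t) has_real_derivative - ur r t) (at r) \<and>
       ((\<lambda>s. - ur s t) has_real_derivative - urr r t) (at r) \<and>
       ((\<lambda>s. - u r s) has_real_derivative - ut r t) (at t) \<and>
       - ut r t = - urr r t + - ur r t / r - (real k)\<^sup>2 * sin (2 * - u r t) / (2 * r\<^sup>2)"
      using e by (auto intro!: DERIV_minus simp: field_simps)
  show ?thesis unfolding classical_sol_def
    using d0 d1 d2 d3 d4 by blast
qed

lemma oc_neg:
  assumes "origin_cond T h g"
  shows "origin_cond T (\<lambda>r t. - h r t) (\<lambda>r t. - g r t)"
  using assms unfolding origin_cond_def
  by (metis minus_equation_iff mult_minus_left of_int_minus)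

lemma between_neg:
  "between_set R t1 t2 (\<lambda>r t. - h r t) (\<lambda>r t. - h2 r t) (\<lambda>r t. - h1 r t) = between_set R t1 t2 h h1 h2"
  by (auto simp: between_set_def)




locale setting =
  fixes k :: nat and T :: ereal and t1 t2 R :: real and h h1 h2 :: "real \<Rightarrow> real \<Rightarrow> real"
    and x :: "real \<times> real" and G :: "(real \<times> real) set"
  assumes t1: "0 \<le> t1" and t12: "t1 < t2" and t2T: "ereal t2 < T" and R0: "0 < R" and R1: "R \<le> 1"
    and sh: "classical_sol k T h" and sh1: "classical_sol k T h1" and sh2: "classical_sol k T h2"
    and xB: "x \<in> between_set R t1 t2 h h1 h2"
    and Gx: "G = connected_component_set (between_set R t1 t2 h h1 h2) x"
begin

abbreviation "Rect \<equiv> {0..R} \<times> {t1..t2}"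
abbreviation "B \<equiv> between_set R t1 t2 h h1 h2"

lemma B_eq: "B = {p \<in> Rect. h1 (fst p) (snd p) < h (fst p) (snd p) \<and> h (fst p) (snd p) < h2 (fst p) (snd p)}"
  by (auto simp: between_set_def)

lemma Rect_sub: "Rect \<subseteq> dom_closed T"
proof
  fix p assume p: "p \<in> Rect"
  have "ereal (snd p) \<le> ereal t2" using p by auto
  hence "ereal (snd p) < T" using t2T by (rule le_less_trans)
  thus "p \<in> dom_closed T" using p t1 R1
    by (auto simp: dom_closed_def)
qed

lemma contH: "continuous_on Rect (\<lambda>p. h (fst p) (snd p))"
  by (rule cs_cont[OF sh Rect_sub])
lemma contH1: "continuous_on Rect (\<lambda>p. h1 (fst p) (snd p))"
  by (rule cs_cont[OF sh1 Rect_sub])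
lemma contH2: "continuous_on Rect (\<lambda>p. h2 (fst p) (snd p))"
  by (rule cs_cont[OF sh2 Rect_sub])

lemma closedRect: "closed Rect" by (simp add: closed_Times)
lemma convexRect: "convex Rect" by (simp add: convex_Times)

lemma G_sub_B: "G \<subseteq> B" using Gx connected_component_subset by blast
lemma B_sub: "B \<subseteq> Rect" by (auto simp: B_eq)
lemma xG: "x \<in> G" using Gx xB by simp
lemma clG_sub: "closure G \<subseteq> Rect"
  using G_sub_B B_sub closure_minimal[OF _ closedRect] by blast
lemma compact_clG: "compact (closure G)"
proof -
  have "compact Rect" by (simp add: compact_Times)
  thus ?thesis using clG_sub closed_closure compact_Int_closed
    by (metis inf.absorb_iff2)
qed

lemma clos_le: "\<forall>p\<in>closure G. h1 (fst p) (snd p) \<le> h (fst p) (snd p) \<and> h (fst p) (snd p) \<le> h2 (fst p) (snd p)"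
proof -
  have c1: "closed {p\<in>Rect. 0 \<le> h (fst p) (snd p) - h1 (fst p) (snd p)}"
    by (rule closed_sub_ge[OF continuous_on_diff[OF contH contH1] closedRect])
  have c2: "closed {p\<in>Rect. 0 \<le> h2 (fst p) (snd p) - h (fst p) (snd p)}"
    by (rule closed_sub_ge[OF continuous_on_diff[OF contH2 contH] closedRect])
  have "G \<subseteq> {p\<in>Rect. 0 \<le> h (fst p) (snd p) - h1 (fst p) (snd p)}"
    using G_sub_B by (force simp: B_eq)
  hence a: "closure G \<subseteq> {p\<in>Rect. 0 \<le> h (fst p) (snd p) - h1 (fst p) (snd p)}"
    by (rule closure_minimal[OF _ c1])
  have "G \<subseteq> {p\<in>Rect. 0 \<le> h2 (fst p) (snd p) - h (fst p) (snd p)}"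
    using G_sub_B by (force simp: B_eq)
  hence b: "closure G \<subseteq> {p\<in>Rect. 0 \<le> h2 (fst p) (snd p) - h (fst p) (snd p)}"
    by (rule closure_minimal[OF _ c2])
  show ?thesis using a b by auto
qed

lemma B_open: "p \<in> B \<Longrightarrow> \<exists>\<rho>>0. \<forall>y\<in>Rect. dist y p < \<rho> \<longrightarrow> y \<in> B"
proof -
  assume pB: "p \<in> B"
  hence pR: "p \<in> Rect" using B_sub by blast
  obtain a where a: "a > 0" "\<forall>y\<in>Rect. dist y p < a \<longrightarrow> h1 (fst y) (snd y) - h (fst y) (snd y) < 0"
    using open_lt[OF continuous_on_diff[OF contH1 contH] pR, of 0] pB by (auto simp: B_eq)
  obtain b where b: "b > 0" "\<forall>y\<in>Rect. dist y p < b \<longrightarrow> h (fst y) (snd y) - h2 (fst y) (snd y) < 0"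
    using open_lt[OF continuous_on_diff[OF contH contH2] pR, of 0] pB by (auto simp: B_eq)
  show ?thesis
    by (rule exI[of _ "min a b"]) (use a b in \<open>auto simp: B_eq\<close>)
qed

lemma nbhd: "p \<in> closure G \<Longrightarrow> p \<in> B \<Longrightarrow> \<exists>\<rho>>0. \<forall>y\<in>Rect. dist y p < \<rho> \<longrightarrow> y \<in> G"
  using B_open comp_nbhd[OF convexRect Gx B_sub] by blast

lemma clG_B: "p \<in> closure G \<Longrightarrow> p \<in> B \<Longrightarrow> p \<in> G"
  using nbhd B_sub by fastforce

lemma bdry: "p \<in> closure G \<Longrightarrow> p \<notin> G \<Longrightarrow> h (fst p) (snd p) = h1 (fst p) (snd p) \<or> h (fst p) (snd p) = h2 (fst p) (snd p)"
proof (rule ccontr)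
  assume a: "p \<in> closure G" "p \<notin> G" "\<not> (h (fst p) (snd p) = h1 (fst p) (snd p) \<or> h (fst p) (snd p) = h2 (fst p) (snd p))"
  hence "p \<in> B" using clos_le clG_sub by (force simp: B_eq)
  thus False using a clG_B by blast
qed

end




context setting begin

lemma lemA:
  assumes oc: "origin_cond T h h1"
    and Ccond: "\<forall>p\<in>closure G. h1 (fst p) (snd p) < C \<and> C < h2 (fst p) (snd p)"
    and nb: "G \<inter> ({p. fst p = 0} \<union> {p. fst p = R} \<union> {p. snd p = t1}) = {}"
    and qG: "q \<in> G" and slab: "\<forall>p\<in>closure G. snd p \<le> snd q \<longrightarrow> h (fst p) (snd p) \<noteq> C"
    and hq: "h (fst q) (snd q) < C"
  shows False
proof -
  define s where "s = snd q"
  define Q where "Q = {p \<in> closure G. snd p \<le> s \<and> h (fst p) (snd p) \<le> C}"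
  have QG: "Q \<subseteq> closure G" by (auto simp: Q_def)
  have QR: "Q \<subseteq> Rect" using QG clG_sub by blast
  have qQ: "q \<in> Q" using qG closure_subset hq by (auto simp: Q_def s_def)
  have Qlt: "\<forall>p\<in>Q. h (fst p) (snd p) < C" using slab by (force simp: Q_def s_def)
  have cQ: "compact Q"
  proof -
    have "Q = closure G \<inter> ({p\<in>Rect. snd p \<le> s} \<inter> {p\<in>Rect. h (fst p) (snd p) \<le> C})"
      using clG_sub by (auto simp: Q_def)
    moreover have "closed {p\<in>Rect. snd p \<le> s}"
      by (rule closed_sub_le[OF continuous_on_snd[OF continuous_on_id] closedRect])
    moreover have "closed {p\<in>Rect. h (fst p) (snd p) \<le> C}"
      by (rule closed_sub_le[OF contH closedRect])
    ultimately show ?thesis using compact_clG by (simp add: closed_Int compact_Int_closed)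
  qed
  have Q0: "\<forall>p\<in>Q. fst p = 0 \<longrightarrow> h (fst p) (snd p) = h1 (fst p) (snd p)"
  proof (intro ballI impI)
    fix p assume p: "p \<in> Q" "fst p = 0"
    hence "p \<notin> G" using nb by auto
    hence "h (fst p) (snd p) = h1 (fst p) (snd p) \<or> h (fst p) (snd p) = h2 (fst p) (snd p)"
      using bdry p QG by blast
    moreover have "h (fst p) (snd p) < h2 (fst p) (snd p)" using Qlt Ccond p QG by force
    ultimately show "h (fst p) (snd p) = h1 (fst p) (snd p)" by auto
  qed
  have Qt: "\<forall>p\<in>Q. 0 \<le> snd p \<and> ereal (snd p) < T"
    using QR Rect_sub by (force simp: dom_closed_def)
  obtain Z where Z: "Z \<subseteq> Q" "compact Z" "\<forall>p\<in>Z. 0 < fst p"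
      "\<forall>p\<in>Q - Z. h1 (fst p) (snd p) < h (fst p) (snd p) \<longrightarrow> sin (2 * h1 (fst p) (snd p)) \<le> sin (2 * h (fst p) (snd p))"
  proof (cases "\<forall>t. 0 \<le> t \<and> ereal t < T \<longrightarrow> h 0 t \<noteq> h1 0 t")
    case True
    have "\<forall>p\<in>Q. 0 < fst p"
    proof
      fix p assume p: "p \<in> Q"
      have "fst p \<ge> 0" using p QR by auto
      moreover have "fst p \<noteq> 0"
      proof
        assume f0: "fst p = 0"
        hence "h 0 (snd p) = h1 0 (snd p)" using Q0 p by force
        thus False using True Qt p by blast
      qed
      ultimately show "0 < fst p" by simp
    qed
    thus ?thesis using that[of Q] cQ by auto
  next
    case False
    then obtain m :: int where m: "\<forall>t. 0 \<le> t \<and> ereal t < T \<longrightarrow> h 0 t = of_int m * pi \<and> h1 0 t = of_int m * pi"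
      using oc unfolding origin_cond_def by blast
    define Z where "Z = Q \<inter> ({p\<in>Rect. pi/4 \<le> \<bar>h (fst p) (snd p) - of_int m * pi\<bar>} \<union> {p\<in>Rect. pi/4 \<le> \<bar>h1 (fst p) (snd p) - of_int m * pi\<bar>})"
    have c1: "closed {p\<in>Rect. pi/4 \<le> \<bar>h (fst p) (snd p) - of_int m * pi\<bar>}"
      by (rule closed_sub_ge[OF _ closedRect]) (intro continuous_intros contH)
    have c2: "closed {p\<in>Rect. pi/4 \<le> \<bar>h1 (fst p) (snd p) - of_int m * pi\<bar>}"
      by (rule closed_sub_ge[OF _ closedRect]) (intro continuous_intros contH1)
    have "compact Z" unfolding Z_def using cQ c1 c2 by (simp add: closed_Un compact_Int_closed)
    moreover have "Z \<subseteq> Q" by (auto simp: Z_def)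
    moreover have "\<forall>p\<in>Z. 0 < fst p"
    proof
      fix p assume p: "p \<in> Z"
      hence pQ: "p \<in> Q" by (auto simp: Z_def)
      have "fst p \<ge> 0" using pQ QR by auto
      moreover have "fst p \<noteq> 0"
      proof
        assume f0: "fst p = 0"
        hence "h 0 (snd p) = of_int m * pi \<and> h1 0 (snd p) = of_int m * pi" using m Qt pQ by blast
        hence "h (fst p) (snd p) = of_int m * pi \<and> h1 (fst p) (snd p) = of_int m * pi" using f0 by simp
        thus False using p pi_gt_zero by (auto simp: Z_def)
      qed
      ultimately show "0 < fst p" by simp
    qed
    moreover have "\<forall>p\<in>Q - Z. h1 (fst p) (snd p) < h (fst p) (snd p) \<longrightarrow> sin (2 * h1 (fst p) (snd p)) \<le> sin (2 * h (fst p) (snd p))"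
    proof (intro ballI impI)
      fix p assume p: "p \<in> Q - Z" and lt: "h1 (fst p) (snd p) < h (fst p) (snd p)"
      define a where "a = h (fst p) (snd p) - of_int m * pi"
      define b where "b = h1 (fst p) (snd p) - of_int m * pi"
      have ab: "\<bar>a\<bar> < pi/4" "\<bar>b\<bar> < pi/4" using p QR by (auto simp: Z_def a_def b_def)
      have "b \<le> a" using lt by (simp add: a_def b_def)
      hence "sin (2*b) \<le> sin (2*a)" using ab by (intro sin_monotone_2pi_le) auto
      moreover have "\<And>c. sin (2 * (c + of_int m * pi)) = sin (2*c)"
      proof -
        fix c :: real
        have "2 * (c + of_int m * pi) = 2*c + (2*pi) * of_int m" by (simp add: algebra_simps)
        thus "sin (2 * (c + of_int m * pi)) = sin (2*c)" by (simp only: sin_add sin_int_2pin cos_int_2pin)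
      qed
      ultimately show "sin (2 * h1 (fst p) (snd p)) \<le> sin (2 * h (fst p) (snd p))"
        by (metis a_def b_def diff_add_cancel)
    qed
    ultimately show ?thesis using that by blast
  qed
  obtain \<delta> where dl: "\<delta> > 0" "\<forall>p\<in>Z. \<delta> \<le> fst p"
  proof (cases "Z = {}")
    case True thus ?thesis using that[of 1] by simp
  next
    case False
    then obtain z where "z \<in> Z" "\<forall>y\<in>Z. fst z \<le> fst y"
      using continuous_attains_inf[OF Z(2) False continuous_on_fst[OF continuous_on_id]] by auto
    thus ?thesis using that[of "fst z"] Z(3) by auto
  qed
  define lam where "lam = (real k)^2 / \<delta>^2 + 1"
  have lam0: "lam > 0" unfolding lam_def by (simp add: add_nonneg_pos)
  define v where "v p = exp (- lam * snd p) * (h (fst p) (snd p) - h1 (fst p) (snd p))" for p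
  have cv: "continuous_on Q v" unfolding v_def
    by (intro continuous_intros continuous_on_subset[OF contH QR] continuous_on_subset[OF contH1 QR])
  obtain p where pQ: "p \<in> Q" and pmax: "\<forall>y\<in>Q. v y \<le> v p"
    using continuous_attains_sup[OF cQ _ cv] qQ by blast
  have "h1 (fst q) (snd q) < h (fst q) (snd q)" using qG G_sub_B by (auto simp: B_eq)
  hence "v q > 0" by (simp add: v_def)
  hence "v p > 0" using pmax qQ by fastforce
  hence W0: "h1 (fst p) (snd p) < h (fst p) (snd p)" by (simp add: v_def zero_less_mult_iff)
  have "h (fst p) (snd p) < C" using Qlt pQ by blast
  moreover have "C < h2 (fst p) (snd p)" using Ccond pQ QG by blast
  ultimately have "p \<in> B" using W0 pQ QR by (auto simp: B_eq)
  hence pG: "p \<in> G" using clG_B pQ QG by blast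
  obtain \<rho> where rho: "\<rho> > 0" "\<forall>y\<in>Rect. dist y p < \<rho> \<longrightarrow> y \<in> G" using nbhd pQ QG \<open>p \<in> B\<close> by blast
  obtain \<rho>2 where rho2: "\<rho>2 > 0" "\<forall>y\<in>Rect. dist y p < \<rho>2 \<longrightarrow> h (fst y) (snd y) < C"
    using open_lt[OF contH, of p C] pQ QR Qlt by blast
  define r0 where "r0 = fst p"
  define t0 where "t0 = snd p"
  have p_eq: "p = (r0, t0)" by (simp add: r0_def t0_def)
  have r0: "0 < r0" "r0 < R" "t1 < t0" "t0 \<le> s" "t0 \<le> t2"
    using nb pG pQ QR by (auto simp: r0_def t0_def Q_def less_le)
  define d where "d = min (min \<rho> \<rho>2) (min r0 (min (R - r0) (t0 - t1)))"
  have d0: "d > 0" using rho rho2 r0 by (simp add: d_def)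
  have inQ: "(y, t) \<in> Q" if "dist (y,t) p < d" "0 \<le> y" "y \<le> R" "t1 \<le> t" "t \<le> t0" for y t
  proof -
    have R: "(y,t) \<in> Rect" using that r0 by auto
    have "(y,t) \<in> G" using rho R that by (auto simp: d_def)
    moreover have "h y t < C" using rho2 R that by (force simp: d_def)
    ultimately show ?thesis using that r0 closure_subset by (auto simp: Q_def)
  qed
  have hor: "\<forall>y. \<bar>y - r0\<bar> < d \<longrightarrow> h y t0 - h1 y t0 \<le> h r0 t0 - h1 r0 t0"
  proof (intro allI impI)
    fix y assume y: "\<bar>y - r0\<bar> < d"
    have "dist (y,t0) p = \<bar>y - r0\<bar>" by (simp add: p_eq dist_Pair_Pair dist_real_def)
    hence "(y,t0) \<in> Q" using y r0 d0 by (intro inQ) (auto simp: d_def)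
    hence "v (y,t0) \<le> v p" using pmax by blast
    thus "h y t0 - h1 y t0 \<le> h r0 t0 - h1 r0 t0" by (simp add: v_def p_eq)
  qed
  have ver: "\<forall>t. t0 - d < t \<and> t \<le> t0 \<longrightarrow> exp (- lam * t) * (h r0 t - h1 r0 t) \<le> exp (- lam * t0) * (h r0 t0 - h1 r0 t0)"
  proof (intro allI impI)
    fix t assume t: "t0 - d < t \<and> t \<le> t0"
    have "dist (r0,t) p = \<bar>t - t0\<bar>" by (simp add: p_eq dist_Pair_Pair dist_real_def)
    hence "(r0,t) \<in> Q" using t r0 d0 by (intro inQ) (auto simp: d_def)
    hence "v (r0,t) \<le> v p" using pmax by blast
    thus "exp (- lam * t) * (h r0 t - h1 r0 t) \<le> exp (- lam * t0) * (h r0 t0 - h1 r0 t0)" by (simp add: v_def p_eq)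
  qed
  obtain ur urr ut where
    e: "\<forall>(r,t)\<in>dom_open T.
           ((\<lambda>s. h s t) has_real_derivative ur r t) (at r) \<and>
           ((\<lambda>s. ur s t) has_real_derivative urr r t) (at r) \<and>
           ((\<lambda>s. h r s) has_real_derivative ut r t) (at t) \<and>
           ut r t = urr r t + ur r t / r - (real k)^2 * sin (2 * h r t) / (2 * r^2)"
    using sh unfolding classical_sol_def by blast
  obtain ur1 urr1 ut1 where
    e1: "\<forall>(r,t)\<in>dom_open T.
           ((\<lambda>s. h1 s t) has_real_derivative ur1 r t) (at r) \<and>
           ((\<lambda>s. ur1 s t) has_real_derivative urr1 r t) (at r) \<and>
           ((\<lambda>s. h1 r s) has_real_derivative ut1 r t) (at t) \<and>
           ut1 r t = urr1 r t + ur1 r t / r - (real k)^2 * sin (2 * h1 r t) / (2 * r^2)"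
    using sh1 unfolding classical_sol_def by blast
  have t0T: "ereal t0 < T" using Qt pQ by (simp add: t0_def)
  have inO: "(y, t0) \<in> dom_open T" if "\<bar>y - r0\<bar> < d" for y
    using that r0 R1 t1 t0T by (auto simp: dom_open_def d_def)
  have pO: "(r0, t0) \<in> dom_open T" using inO[of r0] d0 by simp
  have sd: "ur r0 t0 - ur1 r0 t0 = 0 \<and> urr r0 t0 - urr1 r0 t0 \<le> 0"
  proof (rule second_deriv_max[OF d0 hor])
    show "\<forall>y. \<bar>y - r0\<bar> < d \<longrightarrow> ((\<lambda>y. h y t0 - h1 y t0) has_real_derivative ur y t0 - ur1 y t0) (at y)"
      using e e1 inO by (fastforce intro!: DERIV_diff)
    show "((\<lambda>y. ur y t0 - ur1 y t0) has_real_derivative urr r0 t0 - urr1 r0 t0) (at r0)"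
      using e e1 pO by (fastforce intro!: DERIV_diff)
  qed
  have dt: "((\<lambda>t. exp (- lam * t) * (h r0 t - h1 r0 t)) has_real_derivative
      exp (- lam * t0) * (- lam) * (h r0 t0 - h1 r0 t0) + exp (- lam * t0) * (ut r0 t0 - ut1 r0 t0)) (at t0)"
  proof -
    have a: "((\<lambda>t. h r0 t - h1 r0 t) has_real_derivative ut r0 t0 - ut1 r0 t0) (at t0)"
      using e e1 pO by (fastforce intro!: DERIV_diff)
    have b: "((\<lambda>t. exp (- lam * t)) has_real_derivative exp (- lam * t0) * (- lam)) (at t0)"
      by (auto intro!: derivative_eq_intros)
    show ?thesis using DERIV_mult[OF b a] by (simp add: mult.commute)
  qed
  have "exp (- lam * t0) * (- lam) * (h r0 t0 - h1 r0 t0) + exp (- lam * t0) * (ut r0 t0 - ut1 r0 t0) \<ge> 0"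
    by (rule left_max_deriv[OF d0 ver dt])
  hence "exp (- lam * t0) * ((ut r0 t0 - ut1 r0 t0) - lam * (h r0 t0 - h1 r0 t0)) \<ge> 0"
    by (simp add: algebra_simps)
  hence g1: "lam * (h r0 t0 - h1 r0 t0) \<le> ut r0 t0 - ut1 r0 t0"
    by (simp add: zero_le_mult_iff)
  define S where "S = sin (2 * h r0 t0) - sin (2 * h1 r0 t0)"
  define W where "W = h r0 t0 - h1 r0 t0"
  have W0': "W > 0" using W0 by (simp add: W_def r0_def t0_def)
  have eqs: "ut r0 t0 - ut1 r0 t0 = (urr r0 t0 - urr1 r0 t0) + (ur r0 t0 - ur1 r0 t0) / r0 - (real k)^2 * S / (2 * r0^2)"
  proof -
    have a: "ut r0 t0 = urr r0 t0 + ur r0 t0 / r0 - (real k)^2 * sin (2 * h r0 t0) / (2 * r0^2)"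
      using e pO by fastforce
    have b: "ut1 r0 t0 = urr1 r0 t0 + ur1 r0 t0 / r0 - (real k)^2 * sin (2 * h1 r0 t0) / (2 * r0^2)"
      using e1 pO by fastforce
    show ?thesis unfolding a b S_def by (simp add: diff_divide_distrib right_diff_distrib)
  qed
  have key: "lam * W \<le> - ((real k)^2 * S / (2 * r0^2))"
    using g1 eqs sd by (simp add: W_def)
  show False
  proof (cases "p \<in> Z")
    case True
    hence dr: "\<delta> \<le> r0" using dl by (simp add: r0_def)
    have "\<bar>S\<bar> \<le> \<bar>2 * h r0 t0 - 2 * h1 r0 t0\<bar>" unfolding S_def by (rule sin_lip)
    hence Sb: "- S \<le> 2 * W" using W0' by (simp add: W_def abs_le_iff)
    have "- ((real k)^2 * S / (2 * r0^2)) = (real k)^2 * (- S) / (2 * r0^2)" by simp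
    also have "\<dots> \<le> (real k)^2 * (2 * W) / (2 * r0^2)"
      using Sb r0 by (intro divide_right_mono mult_left_mono) auto
    also have "\<dots> = (real k)^2 * W / r0^2" by simp
    also have "\<dots> \<le> (real k)^2 * W / \<delta>^2"
      using dr dl W0' by (intro divide_left_mono mult_nonneg_nonneg power_mono) auto
    also have "\<dots> < lam * W" using W0' dl by (simp add: lam_def algebra_simps)
    finally show False using key by simp
  next
    case False
    hence "S \<ge> 0" using Z(4) pQ W0 by (simp add: S_def r0_def t0_def)
    hence "- ((real k)^2 * S / (2 * r0^2)) \<le> 0" by simp
    moreover have "lam * W > 0" using lam0 W0' by simp
    ultimately show False using key by simp
  qed
qed

end




context setting begin

lemma part1:
  assumes oc1: "origin_cond T h h1" and oc2: "origin_cond T h h2"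
    and Ccond: "\<forall>p\<in>closure G. h1 (fst p) (snd p) < C \<and> C < h2 (fst p) (snd p)"
  shows "G \<inter> ({p. fst p = 0} \<union> {p. fst p = R} \<union> {p. snd p = t1}) \<noteq> {}"
proof
  assume nb: "G \<inter> ({p. fst p = 0} \<union> {p. fst p = R} \<union> {p. snd p = t1}) = {}"
  have ne: "closure G \<noteq> {}" using xG closure_subset by blast
  obtain p0 where p0: "p0 \<in> closure G" "\<forall>y\<in>closure G. snd p0 \<le> snd y"
    using continuous_attains_inf[OF compact_clG ne continuous_on_snd[OF continuous_on_id]] by blast
  have dd: "dist (a, b - c) (a, b) = \<bar>c\<bar>" for a b c :: real
    by (simp add: dist_Pair_Pair dist_real_def)
  have minpt: "h (fst p) (snd p) \<noteq> C" if p: "p \<in> closure G" "\<forall>y\<in>closure G. snd p \<le> snd y" for p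
  proof -
    have "p \<notin> G"
    proof
      assume pG: "p \<in> G"
      hence pB: "p \<in> B" using G_sub_B by blast
      obtain \<rho> where rho: "\<rho> > 0" "\<forall>y\<in>Rect. dist y p < \<rho> \<longrightarrow> y \<in> G" using nbhd[OF p(1) pB] by blast
      have pr: "0 \<le> fst p" "fst p \<le> R" "t1 < snd p" "snd p \<le> t2"
        using pG nb pB B_sub by (force simp: less_le)+
      define y where "y = (fst p, snd p - min (\<rho>/2) ((snd p - t1)/2))"
      have "dist y p = min (\<rho>/2) ((snd p - t1)/2)"
      proof -
        have "dist y p = dist (fst p, snd p - min (\<rho>/2) ((snd p - t1)/2)) (fst p, snd p)" by (simp add: y_def)
        also have "\<dots> = \<bar>min (\<rho>/2) ((snd p - t1)/2)\<bar>"
          using dd[of "fst p" "snd p" "min (\<rho>/2) ((snd p - t1)/2)"] by simp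
        finally show ?thesis using rho pr by simp
      qed
      hence "dist y p < \<rho>" using rho by simp
      moreover have "y \<in> Rect" using pr rho(1) by (auto simp: y_def min_def field_simps)
      ultimately have "y \<in> closure G" using rho closure_subset by blast
      hence "snd p \<le> snd y" using p by blast
      thus False using rho(1) pr by (simp add: y_def min_def split: if_splits)
    qed
    hence "h (fst p) (snd p) = h1 (fst p) (snd p) \<or> h (fst p) (snd p) = h2 (fst p) (snd p)"
      using bdry p by blast
    thus ?thesis using Ccond p by force
  qed
  obtain tW where tW: "snd p0 < tW" "\<forall>p\<in>closure G. snd p < tW \<longrightarrow> h (fst p) (snd p) \<noteq> C"
  proof (cases "{p \<in> closure G. h (fst p) (snd p) = C} = {}")
    case True thus ?thesis using that[of "snd p0 + 1"] by auto
  next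
    case False
    have "{p \<in> closure G. h (fst p) (snd p) = C} =
       closure G \<inter> ({p\<in>Rect. h (fst p) (snd p) \<le> C} \<inter> {p\<in>Rect. C \<le> h (fst p) (snd p)})"
      using clG_sub by auto
    moreover have "closed ({p\<in>Rect. h (fst p) (snd p) \<le> C} \<inter> {p\<in>Rect. C \<le> h (fst p) (snd p)})"
      using closed_sub_le[OF contH closedRect] closed_sub_ge[OF contH closedRect] by blast
    ultimately have "compact {p \<in> closure G. h (fst p) (snd p) = C}"
      using compact_clG by (simp add: compact_Int_closed)
    then obtain pw where pw: "pw \<in> closure G" "h (fst pw) (snd pw) = C"
      "\<forall>y\<in>{p \<in> closure G. h (fst p) (snd p) = C}. snd pw \<le> snd y"
      using continuous_attains_inf[OF _ False continuous_on_snd[OF continuous_on_id]] by blast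
    have "snd p0 \<le> snd pw" using p0 pw by blast
    moreover have "snd pw \<noteq> snd p0"
    proof
      assume "snd pw = snd p0"
      hence "\<forall>y\<in>closure G. snd pw \<le> snd y" using p0 by simp
      thus False using minpt pw by blast
    qed
    ultimately have "snd p0 < snd pw" by simp
    moreover have "\<forall>p\<in>closure G. snd p < snd pw \<longrightarrow> h (fst p) (snd p) \<noteq> C"
      using pw(3) by force
    ultimately show ?thesis using that by blast
  qed
  obtain q where q: "q \<in> G" "dist q p0 < tW - snd p0"
    using p0(1) tW(1) closure_approachable by (metis diff_gt_0_iff_gt)
  have "dist (snd q) (snd p0) \<le> dist q p0" by (rule dist_snd_le)
  hence "snd q < tW" using q by (simp add: dist_real_def)
  hence slab: "\<forall>p\<in>closure G. snd p \<le> snd q \<longrightarrow> h (fst p) (snd p) \<noteq> C" using tW by fastforce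
  have "h (fst q) (snd q) \<noteq> C" using slab q closure_subset by blast
  hence "h (fst q) (snd q) < C \<or> h (fst q) (snd q) > C" by auto
  thus False
  proof
    assume "h (fst q) (snd q) < C"
    thus False using lemA[OF oc1 Ccond nb q(1) slab] by blast
  next
    assume hq: "h (fst q) (snd q) > C"
    interpret N: setting k T t1 t2 R "\<lambda>r t. - h r t" "\<lambda>r t. - h2 r t" "\<lambda>r t. - h1 r t" x G
      using t1 t12 t2T R0 R1 cs_neg[OF sh] cs_neg[OF sh1] cs_neg[OF sh2] xB Gx
      by unfold_locales (simp_all add: between_neg)
    show False
    proof (rule N.lemA[of "-C" q])
      show "origin_cond T (\<lambda>r t. - h r t) (\<lambda>r t. - h2 r t)" by (rule oc_neg[OF oc2])
      show "\<forall>p\<in>closure G. - h2 (fst p) (snd p) < - C \<and> - C < - h1 (fst p) (snd p)" using Ccond by auto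
      show "G \<inter> ({p. fst p = 0} \<union> {p. fst p = R} \<union> {p. snd p = t1}) = {}" by (rule nb)
      show "q \<in> G" by (rule q(1))
      show "\<forall>p\<in>closure G. snd p \<le> snd q \<longrightarrow> - h (fst p) (snd p) \<noteq> - C" using slab by auto
      show "- h (fst q) (snd q) < - C" using hq by simp
    qed
  qed
qed

end




lemma cs_const:
  assumes "sin (2 * c) = 0"
  shows "classical_sol k T (\<lambda>r t. c)"
  unfolding classical_sol_def
  by (rule conjI, simp, rule exI[of _ "\<lambda>r t. 0"], rule exI[of _ "\<lambda>r t. 0"], rule exI[of _ "\<lambda>r t. 0"])
     (simp add: assms)

lemma sin4: "sin (2 * (pi - 2 * arctan s)) = - (4 * s * (1 - s^2) / (1 + s^2)^2)"
proof -
  define th where "th = arctan s"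
  have q: "1 + s^2 > 0" by (simp add: add_pos_nonneg)
  have sc: "sin th * cos th = s / (1 + s^2)"
    using q by (simp add: th_def sin_arctan cos_arctan)
  have cc: "(cos th)^2 = 1 / (1 + s^2)"
    using q by (simp add: th_def cos_arctan power_divide)
  have ss: "(sin th)^2 = s^2 / (1 + s^2)"
    using q by (simp add: th_def sin_arctan power_divide)
  have "2 * (pi - 2 * th) = 2 * pi - 2 * (2 * th)" by simp
  hence "sin (2 * (pi - 2 * th)) = - sin (2 * (2 * th))" by simp
  also have "sin (2 * (2 * th)) = 2 * (2 * (sin th * cos th)) * ((cos th)^2 - (sin th)^2)"
    by (simp only: sin_double cos_double)
  also have "\<dots> = 4 * s * (1 - s^2) / (1 + s^2)^2"
    unfolding sc cc ss using q by (simp add: field_simps power2_eq_square)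
  finally show ?thesis by (simp add: th_def)
qed

lemma alg:
  fixes r K S :: real
  assumes r: "r > 0"
  shows "((- 2 * K * (K * S / r)) * (r * (1 + S^2)) - (- 2 * K * S) * (1 * (1 + S^2) + 2 * S * (K * S / r) * r))
      / (r * (1 + S^2) * (r * (1 + S^2)))
     = - 2 * K * S * (K * (1 - S^2) - (1 + S^2)) / (r^2 * (1 + S^2)^2)"
proof -
  have e1: "(- 2 * K * (K * S / r)) * (r * (1 + S^2)) = - 2 * K^2 * S * (1 + S^2)"
    using r by (simp add: field_simps power2_eq_square)
  have e2: "2 * S * (K * S / r) * r = 2 * K * S^2"
    using r by (simp add: field_simps power2_eq_square)
  have e3: "r * (1 + S^2) * (r * (1 + S^2)) = r^2 * (1 + S^2)^2"
    by (simp add: power2_eq_square algebra_simps)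
  have e4: "- 2 * K^2 * S * (1 + S^2) - (- 2 * K * S) * (1 * (1 + S^2) + 2 * K * S^2) = - 2 * K * S * (K * (1 - S^2) - (1 + S^2))"
    by (simp add: algebra_simps power2_eq_square)
  show ?thesis unfolding e1 e2 e3 e4 ..
qed

lemma alg2:
  fixes r K S :: real
  assumes r: "r > 0"
  shows "0 = - 2 * K * S * (K * (1 - S^2) - (1 + S^2)) / (r^2 * (1 + S^2)^2)
     + - 2 * K * S / (r * (1 + S^2)) / r - K^2 * - (4 * S * (1 - S^2) / (1 + S^2)^2) / (2 * r^2)"
proof -
  define Q where "Q = 1 + S^2"
  have q: "Q > 0" by (simp add: Q_def add_pos_nonneg)
  have "0 = - 2 * K * S * (K * (1 - S^2) - Q) / (r^2 * Q^2)
     + - 2 * K * S / (r * Q) / r - K^2 * - (4 * S * (1 - S^2) / Q^2) / (2 * r^2)"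
    using r q by (simp add: field_simps power2_eq_square)
  thus ?thesis by (simp add: Q_def)
qed

lemma cs_chi:
  shows "classical_sol k T (\<lambda>r t. pi - 2 * arctan (\<alpha> ^ k * r ^ k))"
proof -
  define s where "s r = \<alpha> ^ k * r ^ k" for r :: real
  have ds: "(s has_real_derivative real k * s r / r) (at r)" if "r > 0" for r
  proof -
    have "(s has_real_derivative \<alpha> ^ k * (real k * r ^ (k - 1))) (at r)"
      unfolding s_def by (auto intro!: derivative_eq_intros)
    moreover have "\<alpha> ^ k * (real k * r ^ (k - 1)) = real k * s r / r"
    proof (cases k)
      case 0 thus ?thesis by simp
    next
      case (Suc j) thus ?thesis using that by (simp add: s_def field_simps)
    qed
    ultimately show ?thesis by simp
  qed
  define ur where "ur r t = - 2 * real k * s r / (r * (1 + (s r)^2))" for r t :: real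
  define urr where "urr r t = - 2 * real k * s r * (real k * (1 - (s r)^2) - (1 + (s r)^2)) / (r^2 * (1 + (s r)^2)^2)" for r t :: real
  have q: "1 + (s r)^2 > 0" for r by (simp add: add_pos_nonneg)
  have q': "1 + (s r)^2 \<noteq> 0" for r using q[of r] by simp
  have dchi: "((\<lambda>r. pi - 2 * arctan (s r)) has_real_derivative ur r t) (at r)" if "r > 0" for r t
    using that q[of r] by (auto intro!: derivative_eq_intros ds[OF that] simp: ur_def field_simps)
  have dur: "((\<lambda>r. ur r t) has_real_derivative urr r t) (at r)" if "r > 0" for r t
  proof -
    have dn: "((\<lambda>r. - 2 * real k * s r) has_real_derivative - 2 * real k * (real k * s r / r)) (at r)"
      by (rule DERIV_cmult[OF ds[OF that]])
    have d2: "((\<lambda>r. 1 + (s r)^2) has_real_derivative 2 * s r * (real k * s r / r)) (at r)"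
      using ds[OF that] by (auto intro!: derivative_eq_intros)
    have dd: "((\<lambda>r. r * (1 + (s r)^2)) has_real_derivative 1 * (1 + (s r)^2) + 2 * s r * (real k * s r / r) * r) (at r)"
      by (rule DERIV_mult[OF DERIV_ident d2])
    have "r * (1 + (s r)^2) \<noteq> 0" using that q[of r] by simp
    from DERIV_divide[OF dn dd this] show ?thesis
      unfolding alg[OF that, of "real k" "s r"] urr_def ur_def .
  qed
  have eq: "0 = urr r t + ur r t / r - (real k)^2 * sin (2 * (pi - 2 * arctan (s r))) / (2 * r^2)" if "r > 0" for r t
    unfolding sin4 ur_def urr_def by (rule alg2[OF that])
  have contS: "continuous_on X (\<lambda>p. s (fst p))" for X
    unfolding s_def by (intro continuous_intros)
  have c0: "continuous_on (dom_closed T) (\<lambda>(r, t). pi - 2 * arctan (\<alpha> ^ k * r ^ k))"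
      by (simp add: case_prod_unfold) (intro continuous_intros)
  have c1: "continuous_on (dom_open T) (\<lambda>(r, t). ur r t)"
      unfolding ur_def case_prod_unfold using q
      by (intro continuous_intros contS) (auto simp: dom_open_def q')
  have c2: "continuous_on (dom_open T) (\<lambda>(r, t). urr r t)"
      unfolding urr_def case_prod_unfold using q
      by (intro continuous_intros contS) (auto simp: dom_open_def q')
  have c3: "continuous_on (dom_open T) (\<lambda>(r, t). (\<lambda>r t. 0::real) r t)" by simp
  have c4: "\<forall>(r, t)\<in>dom_open T.
       ((\<lambda>sa. pi - 2 * arctan (\<alpha> ^ k * sa ^ k)) has_real_derivative ur r t) (at r) \<and>
       ((\<lambda>sa. ur sa t) has_real_derivative urr r t) (at r) \<and>
       ((\<lambda>sa. pi - 2 * arctan (\<alpha> ^ k * r ^ k)) has_real_derivative (\<lambda>r t. 0::real) r t) (at t) \<and>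
       (\<lambda>r t. 0::real) r t = urr r t + ur r t / r - (real k)\<^sup>2 * sin (2 * (pi - 2 * arctan (\<alpha> ^ k * r ^ k))) / (2 * r\<^sup>2)"
      using dchi dur eq by (auto simp: dom_open_def s_def)
  show ?thesis unfolding classical_sol_def
    apply (rule conjI[OF c0])
    apply (rule exI[of _ ur], rule exI[of _ urr], rule exI[of _ "\<lambda>r t. 0::real"])
    using c1 c2 c3 c4 by blast
qed




lemma part2:
  fixes h h1 h2 :: "real \<Rightarrow> real \<Rightarrow> real"
  assumes sh: "classical_sol k T h" and h0: "\<forall>t. 0 \<le> t \<and> ereal t < T \<longrightarrow> h 0 t = 0"
    and h1c: "h1 = (\<lambda>r t. pi / 2) \<or> (\<exists>\<alpha>::real. \<alpha> > 0 \<and> h1 = (\<lambda>r t. pi - 2 * arctan (\<alpha> ^ k * r ^ k)))"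
    and h2c: "h2 = (\<lambda>r t. pi)"
  shows "classical_sol k T h1 \<and> classical_sol k T h2 \<and>
          origin_cond T h h1 \<and> origin_cond T h h2 \<and>
          (\<forall>(t1::real) t2 (R::real) \<Gamma>.
              0 \<le> t1 \<and> t1 < t2 \<and> ereal t2 < T \<and> 0 < R \<and> R \<le> 1 \<and> \<Gamma> \<noteq> {} \<and>
              (\<exists>x\<in>between_set R t1 t2 h h1 h2. \<Gamma> = connected_component_set (between_set R t1 t2 h h1 h2) x)
              \<longrightarrow> (\<exists>C::real. \<forall>p\<in>closure \<Gamma>. h1 (fst p) (snd p) < C \<and> C < h2 (fst p) (snd p)))"
proof (intro conjI allI impI)
  show s1: "classical_sol k T h1"
    using h1c cs_const[of "pi/2" k T] cs_chi by auto
  show s2: "classical_sol k T h2"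
    using h2c cs_const[of pi k T] by simp
  have "\<forall>r. h1 r 0 \<noteq> 0 \<and> h1 0 r \<noteq> 0"
  proof -
    have "pi - 2 * arctan y \<noteq> 0" for y using arctan_ubound[of y] by simp
    thus ?thesis using h1c by auto
  qed
  thus "origin_cond T h h1" using h0 by (auto simp: origin_cond_def)
  show "origin_cond T h h2" using h0 h2c by (auto simp: origin_cond_def)
  fix t1 t2 R :: real and \<Gamma> :: "(real \<times> real) set"
  assume a: "0 \<le> t1 \<and> t1 < t2 \<and> ereal t2 < T \<and> 0 < R \<and> R \<le> 1 \<and> \<Gamma> \<noteq> {} \<and>
              (\<exists>x\<in>between_set R t1 t2 h h1 h2. \<Gamma> = connected_component_set (between_set R t1 t2 h h1 h2) x)"
  then obtain x where x: "x \<in> between_set R t1 t2 h h1 h2" "\<Gamma> = connected_component_set (between_set R t1 t2 h h1 h2) x"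
    by blast
  interpret S: setting k T t1 t2 R h h1 h2 x \<Gamma>
    using a x sh s1 s2 by unfold_locales auto
  have easy: "\<exists>C. \<forall>p\<in>closure \<Gamma>. h1 (fst p) (snd p) < C \<and> C < h2 (fst p) (snd p)"
    if "h1 = (\<lambda>r t. pi / 2)"
    by (rule exI[of _ "3 * pi / 4"]) (simp add: that h2c)
  show "\<exists>C. \<forall>p\<in>closure \<Gamma>. h1 (fst p) (snd p) < C \<and> C < h2 (fst p) (snd p)"
  proof (cases "h1 = (\<lambda>r t. pi / 2)")
    case True thus ?thesis by (rule easy)
  next
    case False
    then obtain \<alpha> :: real where al: "\<alpha> > 0" "h1 = (\<lambda>r t. pi - 2 * arctan (\<alpha> ^ k * r ^ k))"
      using h1c by blast
    show ?thesis
    proof (cases "k = 0")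
      case True
      hence "h1 = (\<lambda>r t. pi / 2)" using al by (simp add: arctan_one)
      thus ?thesis by (rule easy)
    next
      case False
      have pos: "\<forall>p\<in>closure \<Gamma>. 0 < fst p"
      proof
        fix p assume p: "p \<in> closure \<Gamma>"
        hence pR: "p \<in> S.Rect" using S.clG_sub by blast
        have "fst p \<noteq> 0"
        proof
          assume f0: "fst p = 0"
          have "p \<in> dom_closed T" using pR S.Rect_sub by blast
          hence "h 0 (snd p) = 0" using h0 by (auto simp: dom_closed_def)
          moreover have "h1 (fst p) (snd p) \<le> h (fst p) (snd p)" using S.clos_le p by blast
          ultimately show False using f0 al False pi_gt_zero by (simp add: zero_power)
        qed
        thus "0 < fst p" using pR by auto
      qed
      have ne: "closure \<Gamma> \<noteq> {}" using S.xG closure_subset by blast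
      obtain z where z: "z \<in> closure \<Gamma>" "\<forall>y\<in>closure \<Gamma>. fst z \<le> fst y"
        using continuous_attains_inf[OF S.compact_clG ne continuous_on_fst[OF continuous_on_id]] by blast
      define \<delta> where "\<delta> = fst z"
      have d0: "\<delta> > 0" using pos z by (simp add: \<delta>_def)
      define a where "a = arctan (\<alpha> ^ k * \<delta> ^ k)"
      have a0: "a > 0" using al d0 by (simp add: a_def)
      show ?thesis
      proof (rule exI[of _ "pi - a"], intro ballI conjI)
        fix p assume p: "p \<in> closure \<Gamma>"
        have "\<delta> \<le> fst p" using z p by (simp add: \<delta>_def)
        hence "\<alpha> ^ k * \<delta> ^ k \<le> \<alpha> ^ k * fst p ^ k"
          using d0 al by (intro mult_left_mono power_mono) auto
        hence "a \<le> arctan (\<alpha> ^ k * fst p ^ k)" unfolding a_def by (rule arctan_monotone')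
        thus "h1 (fst p) (snd p) < pi - a" using al a0 by simp
        show "pi - a < h2 (fst p) (snd p)" using a0 h2c by simp
      qed
    qed
  qed
qed



theorem mainTheorem17:
  shows
  "(\<forall>(k::nat) (T::ereal) (t1::real) t2 (R::real) h h1 h2 \<Gamma> (C::real).
      0 \<le> t1 \<and> t1 < t2 \<and> ereal t2 < T \<and> 0 < R \<and> R \<le> 1 \<and>
      classical_sol k T h \<and> classical_sol k T h1 \<and> classical_sol k T h2 \<and>
      origin_cond T h h1 \<and> origin_cond T h h2 \<and>
      \<Gamma> \<noteq> {} \<and>
      (\<exists>x\<in>between_set R t1 t2 h h1 h2. \<Gamma> = connected_component_set (between_set R t1 t2 h h1 h2) x) \<and>
      (\<forall>p\<in>closure \<Gamma>. h1 (fst p) (snd p) < C \<and> C < h2 (fst p) (snd p))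
      \<longrightarrow> \<Gamma> \<inter> ({p. fst p = 0} \<union> {p. fst p = R} \<union> {p. snd p = t1}) \<noteq> {})
   \<and>
   (\<forall>(k::nat) (T::ereal) h h1 h2.
      classical_sol k T h \<and> (\<forall>t. 0 \<le> t \<and> ereal t < T \<longrightarrow> h 0 t = 0) \<and>
      (h1 = (\<lambda>r t. pi / 2) \<or> (\<exists>\<alpha>::real. \<alpha> > 0 \<and> h1 = (\<lambda>r t. pi - 2 * arctan (\<alpha> ^ k * r ^ k)))) \<and>
      h2 = (\<lambda>r t. pi)
      \<longrightarrow> classical_sol k T h1 \<and> classical_sol k T h2 \<and>
          origin_cond T h h1 \<and> origin_cond T h h2 \<and>
          (\<forall>(t1::real) t2 (R::real) \<Gamma>.
              0 \<le> t1 \<and> t1 < t2 \<and> ereal t2 < T \<and> 0 < R \<and> R \<le> 1 \<and> \<Gamma> \<noteq> {} \<and>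
              (\<exists>x\<in>between_set R t1 t2 h h1 h2. \<Gamma> = connected_component_set (between_set R t1 t2 h h1 h2) x)
              \<longrightarrow> (\<exists>C::real. \<forall>p\<in>closure \<Gamma>. h1 (fst p) (snd p) < C \<and> C < h2 (fst p) (snd p))))"
proof (rule conjI; intro allI impI)
  fix k :: nat and T :: ereal and t1 t2 R :: real and h h1 h2 :: "real \<Rightarrow> real \<Rightarrow> real"
    and \<Gamma> :: "(real \<times> real) set" and C :: real
  assume a: "0 \<le> t1 \<and> t1 < t2 \<and> ereal t2 < T \<and> 0 < R \<and> R \<le> 1 \<and>
      classical_sol k T h \<and> classical_sol k T h1 \<and> classical_sol k T h2 \<and>
      origin_cond T h h1 \<and> origin_cond T h h2 \<and>
      \<Gamma> \<noteq> {} \<and>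
      (\<exists>x\<in>between_set R t1 t2 h h1 h2. \<Gamma> = connected_component_set (between_set R t1 t2 h h1 h2) x) \<and>
      (\<forall>p\<in>closure \<Gamma>. h1 (fst p) (snd p) < C \<and> C < h2 (fst p) (snd p))"
  then obtain x where x: "x \<in> between_set R t1 t2 h h1 h2" "\<Gamma> = connected_component_set (between_set R t1 t2 h h1 h2) x"
    by blast
  interpret S: setting k T t1 t2 R h h1 h2 x \<Gamma>
    using a x by unfold_locales auto
  show "\<Gamma> \<inter> ({p. fst p = 0} \<union> {p. fst p = R} \<union> {p. snd p = t1}) \<noteq> {}"
    using S.part1 a by blast
next
  fix k :: nat and T :: ereal and h h1 h2 :: "real \<Rightarrow> real \<Rightarrow> real"
  assume "classical_sol k T h \<and> (\<forall>t. 0 \<le> t \<and> ereal t < T \<longrightarrow> h 0 t = 0) \<and>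
      (h1 = (\<lambda>r t. pi / 2) \<or> (\<exists>\<alpha>::real. \<alpha> > 0 \<and> h1 = (\<lambda>r t. pi - 2 * arctan (\<alpha> ^ k * r ^ k)))) \<and>
      h2 = (\<lambda>r t. pi)"
  thus "classical_sol k T h1 \<and> classical_sol k T h2 \<and>
          origin_cond T h h1 \<and> origin_cond T h h2 \<and>
          (\<forall>(t1::real) t2 (R::real) \<Gamma>.
              0 \<le> t1 \<and> t1 < t2 \<and> ereal t2 < T \<and> 0 < R \<and> R \<le> 1 \<and> \<Gamma> \<noteq> {} \<and>
              (\<exists>x\<in>between_set R t1 t2 h h1 h2. \<Gamma> = connected_component_set (between_set R t1 t2 h h1 h2) x)
              \<longrightarrow> (\<exists>C::real. \<forall>p\<in>closure \<Gamma>. h1 (fst p) (snd p) < C \<and> C < h2 (fst p) (snd p)))"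
    using part2[of k T h h1 h2] by blast
qed

end
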